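(* Let $\Omega = [a,b)$ be a bounded interval with periodic boundary conditions, let $k \ge 0$ be an integer, let $T_k$ be the space of real-valued trigonometric polynomials on $\Omega$ of degree at most $k$, let $P$ denote the $L^2(\Omega)$-orthogonal projection onto $T_k$, and let $\beta \in \mathbb{R}$. Let $(v,w) \colon I \to T_k \times T_k$ (with $I$ an open time interval) be a continuously differentiable solution of the Fourier Galerkin semidiscretization of the nonlinear Schrödinger equation $\mathrm{i} u_t + u_{xx} + \beta |u|^2 u = 0$ written for $u = v + \mathrm{i} w$, \[ \begin{aligned} \partial_t v &= -w_{xx} - \beta P \bigl( (v^2 + w^2) w \bigr), \\ \partial_t w &= v_{xx} + \beta P \bigl( (v^2 + w^2) v \bigr). \end{aligned} \] Then the mass, momentum, and energy \[ \mathcal{M} = \int_\Omega ( v^2 + w^2 ) \,\mathrm{d}x, \qquad \mathcal{P} = \int_\Omega ( v w_x - w v_x ) \,\mathrm{d}x, \qquad \mathcal{E} = \int_\Omega \Bigl( v_x^2 + w_x^2 - \frac{\beta}{2} ( v^2 + w^2 )^2 \Bigr) \mathrm{d}x \] are constant in time along $(v,w)$.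
   Context: The semidiscretization is an ODE on the finite-dimensional space $T_k \times T_k$. *)

theory Defs
  imports "HOL-Analysis.Analysis"
begin

text \<open>Real trigonometric polynomials of degree at most k on the periodic interval [a,b),
  represented by their (b-a)-periodic extension to the whole real line.\<close>
definition trig_poly :: "real \<Rightarrow> real \<Rightarrow> nat \<Rightarrow> (real \<Rightarrow> real) set" where
  "trig_poly a b k = {f. \<exists>(c::nat \<Rightarrow> real) (s::nat \<Rightarrow> real). \<forall>x.
      f x = c 0 + (\<Sum>j=1..k. c j * cos (2 * pi * real j * (x - a) / (b - a))
                              + s j * sin (2 * pi * real j * (x - a) / (b - a)))}"

definition L2_proj :: "real \<Rightarrow> real \<Rightarrow> nat \<Rightarrow> (real \<Rightarrow> real) \<Rightarrow> (real \<Rightarrow> real)" where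
  "L2_proj a b k f = (THE g. g \<in> trig_poly a b k \<and>
      (\<forall>h \<in> trig_poly a b k. integral {a..b} (\<lambda>x. (f x - g x) * h x) = 0))"

definition nls_mass :: "real \<Rightarrow> real \<Rightarrow> (real \<Rightarrow> real) \<Rightarrow> (real \<Rightarrow> real) \<Rightarrow> real" where
  "nls_mass a b v w = integral {a..b} (\<lambda>x. (v x)\<^sup>2 + (w x)\<^sup>2)"

definition nls_momentum :: "real \<Rightarrow> real \<Rightarrow> (real \<Rightarrow> real) \<Rightarrow> (real \<Rightarrow> real) \<Rightarrow> real" where
  "nls_momentum a b v w = integral {a..b} (\<lambda>x. v x * deriv w x - w x * deriv v x)"

definition nls_energy :: "real \<Rightarrow> real \<Rightarrow> real \<Rightarrow> (real \<Rightarrow> real) \<Rightarrow> (real \<Rightarrow> real) \<Rightarrow> real" where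
  "nls_energy \<beta> a b v w = integral {a..b}
     (\<lambda>x. (deriv v x)\<^sup>2 + (deriv w x)\<^sup>2 - \<beta> / 2 * ((v x)\<^sup>2 + (w x)\<^sup>2)\<^sup>2)"

end

theory Submission
  imports Defs
begin

locale tpl =
  fixes a b :: real and k :: nat
  assumes ab: "a < b"
begin

definition Cf :: "nat \<Rightarrow> real \<Rightarrow> real" where
  "Cf j x = cos (2 * pi * real j * (x - a) / (b - a))"
definition Sf :: "nat \<Rightarrow> real \<Rightarrow> real" where
  "Sf j x = sin (2 * pi * real j * (x - a) / (b - a))"
definition tp :: "(nat \<Rightarrow> real) \<Rightarrow> (nat \<Rightarrow> real) \<Rightarrow> real \<Rightarrow> real" where
  "tp c s x = (\<Sum>j\<le>k. c j * Cf j x + s j * Sf j x)"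
definition om :: real where "om = 2 * pi / (b - a)"
definition dco :: "(nat \<Rightarrow> real) \<Rightarrow> nat \<Rightarrow> real" where
  "dco s j = real j * om * s j"
definition dsi :: "(nat \<Rightarrow> real) \<Rightarrow> nat \<Rightarrow> real" where
  "dsi c j = - (real j * om * c j)"

lemma Cf_alt: "Cf j x = cos (real j * om * (x - a))"
  unfolding Cf_def om_def by (simp add: field_simps)
lemma Sf_alt: "Sf j x = sin (real j * om * (x - a))"
  unfolding Sf_def om_def by (simp add: field_simps)

lemma Cf0 [simp]: "Cf 0 x = 1" by (simp add: Cf_def)
lemma Sf0 [simp]: "Sf 0 x = 0" by (simp add: Sf_def)

lemma tp_iff: "f \<in> trig_poly a b k \<longleftrightarrow> (\<exists>c s. f = tp c s)"
proof -
  have *: "tp c s x = c 0 + (\<Sum>j=1..k. c j * cos (2 * pi * real j * (x - a) / (b - a))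
                              + s j * sin (2 * pi * real j * (x - a) / (b - a)))" for c s x
    unfolding tp_def by (simp add: atMost_atLeast0 sum.atLeast_Suc_atMost Cf_def Sf_def)
  show ?thesis unfolding trig_poly_def by (auto simp: * fun_eq_iff)
qed

lemma Cf_deriv: "(Cf j has_real_derivative (- (real j * om) * Sf j x)) (at x)"
  unfolding Cf_alt Sf_alt
  by (auto intro!: derivative_eq_intros simp: algebra_simps)
lemma Sf_deriv: "(Sf j has_real_derivative (real j * om) * Cf j x) (at x)"
  unfolding Cf_alt Sf_alt
  by (auto intro!: derivative_eq_intros simp: algebra_simps)

lemma tp_deriv: "(tp c s has_real_derivative tp (dco s) (dsi c) x) (at x)"
proof -
  have "((\<lambda>x. \<Sum>j\<le>k. c j * Cf j x + s j * Sf j x) has_real_derivative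
     (\<Sum>j\<le>k. c j * (- (real j * om) * Sf j x) + s j * ((real j * om) * Cf j x))) (at x)"
    by (intro DERIV_sum DERIV_add DERIV_cmult Cf_deriv Sf_deriv)
  moreover have "(\<Sum>j\<le>k. c j * (- (real j * om) * Sf j x) + s j * ((real j * om) * Cf j x))
      = tp (dco s) (dsi c) x"
    unfolding tp_def dco_def dsi_def by (intro sum.cong) (auto simp: algebra_simps)
  ultimately show ?thesis unfolding tp_def[abs_def] by simp
qed

lemma deriv_tp: "deriv (tp c s) = tp (dco s) (dsi c)"
  using tp_deriv DERIV_imp_deriv by blast

lemma Cf_cont [continuous_intros]: "continuous_on S (Cf j)"
  unfolding Cf_alt by (intro continuous_intros)
lemma Sf_cont [continuous_intros]: "continuous_on S (Sf j)"
  unfolding Sf_alt by (intro continuous_intros)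
lemma tp_cont [continuous_intros]: "continuous_on S (tp c s)"
  unfolding tp_def[abs_def] by (intro continuous_intros)
lemma tp_cont' [continuous_intros]: "continuous_on S g \<Longrightarrow> continuous_on S (\<lambda>x. tp c s (g x))"
  using continuous_on_compose2[OF tp_cont[of UNIV] ] by auto

lemma Cf_a: "Cf j a = 1" by (simp add: Cf_def)
lemma Sf_a: "Sf j a = 0" by (simp add: Sf_def)
lemma Cf_b: "Cf j b = 1"
proof -
  have "2 * pi * real j * (b - a) / (b - a) = 2 * pi * of_int (int j)" using ab by simp
  then show ?thesis unfolding Cf_def by (metis cos_int_2pin)
qed
lemma Sf_b: "Sf j b = 0"
proof -
  have "2 * pi * real j * (b - a) / (b - a) = 2 * pi * of_int (int j)" using ab by simp
  then show ?thesis unfolding Sf_def by (metis sin_int_2pin)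
qed
lemma tp_per: "tp c s b = tp c s a"
  unfolding tp_def by (simp add: Cf_a Cf_b Sf_a Sf_b)

lemma om_pos: "om > 0" using ab by (simp add: om_def)
lemma om_L: "om * (b - a) = 2 * pi" using ab by (simp add: om_def)

lemma int_cos0: "(n::int) \<noteq> 0 \<Longrightarrow> integral {a..b} (\<lambda>x. cos (of_int n * om * (x - a))) = 0"
proof -
  assume n: "n \<noteq> 0"
  have "((\<lambda>x. cos (of_int n * om * (x - a))) has_integral
      ((\<lambda>x. sin (of_int n * om * (x - a)) / (of_int n * om)) b - (\<lambda>x. sin (of_int n * om * (x - a)) / (of_int n * om)) a)) {a..b}"
    apply (rule fundamental_theorem_of_calculus)
    using ab n om_pos
    by (auto intro!: derivative_eq_intros simp: has_real_derivative_iff_has_vector_derivative[symmetric])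
  moreover have "of_int n * om * (b - a) = 2 * pi * of_int n" using om_L by (simp add: algebra_simps)
  ultimately show ?thesis by (simp add: integral_unique)
qed

lemma int_sin0: "integral {a..b} (\<lambda>x. sin (of_int (n::int) * om * (x - a))) = 0"
proof (cases "n = 0")
  case True then show ?thesis by simp
next
  case n: False
  have "((\<lambda>x. sin (of_int n * om * (x - a))) has_integral
      ((\<lambda>x. - cos (of_int n * om * (x - a)) / (of_int n * om)) b - (\<lambda>x. - cos (of_int n * om * (x - a)) / (of_int n * om)) a)) {a..b}"
    apply (rule fundamental_theorem_of_calculus)
    using ab n om_pos
    by (auto intro!: derivative_eq_intros simp: has_real_derivative_iff_has_vector_derivative[symmetric])
  moreover have "of_int n * om * (b - a) = 2 * pi * of_int n" using om_L by (simp add: algebra_simps)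
  ultimately show ?thesis by (simp add: integral_unique)
qed

lemma int_cos: "integral {a..b} (\<lambda>x. cos (of_int (n::int) * om * (x - a))) = (if n = 0 then b - a else 0)"
  using int_cos0[of n] ab by auto

lemma integrable_cont [intro]: "continuous_on {a..b} (f::real\<Rightarrow>real) \<Longrightarrow> f integrable_on {a..b}"
  by (rule integrable_continuous_interval)

lemma intCC: "integral {a..b} (\<lambda>x. Cf j x * Cf l x) =
   (if j = l then (if j = 0 then b - a else (b - a) / 2) else 0)"
proof -
  have "Cf j x * Cf l x = (cos (of_int (int j - int l) * om * (x - a)) + cos (of_int (int j + int l) * om * (x - a))) / 2" for x
    unfolding Cf_alt cos_times_cos by (simp add: algebra_simps)
  then have eq: "(\<lambda>x. Cf j x * Cf l x) = (\<lambda>x. (cos (of_int (int j - int l) * om * (x - a)) + cos (of_int (int j + int l) * om * (x - a))) / 2)" by (rule ext)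
  have "integral {a..b} (\<lambda>x. Cf j x * Cf l x) = (integral {a..b} (\<lambda>x. cos (of_int (int j - int l) * om * (x - a)))
     + integral {a..b} (\<lambda>x. cos (of_int (int j + int l) * om * (x - a)))) / 2"
    unfolding eq integral_divide by (subst integral_add) (auto intro!: integrable_cont continuous_intros)
  then show ?thesis unfolding int_cos using ab by auto
qed

lemma intSS: "integral {a..b} (\<lambda>x. Sf j x * Sf l x) =
   (if j = l \<and> j \<noteq> 0 then (b - a) / 2 else 0)"
proof -
  have "Sf j x * Sf l x = (cos (of_int (int j - int l) * om * (x - a)) - cos (of_int (int j + int l) * om * (x - a))) / 2" for x
    unfolding Sf_alt sin_times_sin by (simp add: algebra_simps)
  then have eq: "(\<lambda>x. Sf j x * Sf l x) = (\<lambda>x. (cos (of_int (int j - int l) * om * (x - a)) - cos (of_int (int j + int l) * om * (x - a))) / 2)" by (rule ext)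
  have "integral {a..b} (\<lambda>x. Sf j x * Sf l x) = (integral {a..b} (\<lambda>x. cos (of_int (int j - int l) * om * (x - a)))
     - integral {a..b} (\<lambda>x. cos (of_int (int j + int l) * om * (x - a)))) / 2"
    unfolding eq integral_divide by (subst integral_diff) (auto intro!: integrable_cont continuous_intros)
  then show ?thesis unfolding int_cos by auto
qed

lemma intSC: "integral {a..b} (\<lambda>x. Sf j x * Cf l x) = 0"
proof -
  have "Sf j x * Cf l x = (sin (of_int (int j + int l) * om * (x - a)) + sin (of_int (int j - int l) * om * (x - a))) / 2" for x
    unfolding Sf_alt Cf_alt sin_times_cos by (simp add: algebra_simps)
  then have eq: "(\<lambda>x. Sf j x * Cf l x) = (\<lambda>x. (sin (of_int (int j + int l) * om * (x - a)) + sin (of_int (int j - int l) * om * (x - a))) / 2)" by (rule ext)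
  have "integral {a..b} (\<lambda>x. Sf j x * Cf l x) = (integral {a..b} (\<lambda>x. sin (of_int (int j + int l) * om * (x - a)))
     + integral {a..b} (\<lambda>x. sin (of_int (int j - int l) * om * (x - a)))) / 2"
    unfolding eq integral_divide by (subst integral_add) (auto intro!: integrable_cont continuous_intros)
  then show ?thesis unfolding int_sin0 by auto
qed

lemma intCS: "integral {a..b} (\<lambda>x. Cf j x * Sf l x) = 0"
  using intSC[of l j] by (simp add: mult.commute)
lemma intS1: "integral {a..b} (Sf j) = 0"
  using intSC[of j 0] by simp
lemma intC1: "integral {a..b} (Cf j) = (if j = 0 then b - a else 0)"
  using intCC[of j 0] by simp

lemma int_h_tp:
  assumes h: "continuous_on {a..b} h"
  shows "integral {a..b} (\<lambda>x. h x * tp c s x) =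
    (\<Sum>j\<le>k. c j * integral {a..b} (\<lambda>x. h x * Cf j x) + s j * integral {a..b} (\<lambda>x. h x * Sf j x))"
proof -
  have "(\<lambda>x. h x * tp c s x) = (\<lambda>x. \<Sum>j\<le>k. c j * (h x * Cf j x) + s j * (h x * Sf j x))"
    unfolding tp_def by (auto simp: sum_distrib_left algebra_simps)
  then have "integral {a..b} (\<lambda>x. h x * tp c s x) = (\<Sum>j\<le>k. integral {a..b} (\<lambda>x. c j * (h x * Cf j x) + s j * (h x * Sf j x)))"
    by (simp add: integral_sum integrable_cont continuous_intros h)
  also have "\<dots> = (\<Sum>j\<le>k. c j * integral {a..b} (\<lambda>x. h x * Cf j x) + s j * integral {a..b} (\<lambda>x. h x * Sf j x))"
    by (intro sum.cong refl, subst integral_add) (auto intro!: integrable_cont continuous_intros h)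
  finally show ?thesis .
qed

lemma int_tpC: "l \<le> k \<Longrightarrow> integral {a..b} (\<lambda>x. tp c s x * Cf l x) = (if l = 0 then b - a else (b - a) / 2) * c l"
proof -
  assume l: "l \<le> k"
  have "integral {a..b} (\<lambda>x. tp c s x * Cf l x) = integral {a..b} (\<lambda>x. Cf l x * tp c s x)"
    by (simp add: mult.commute)
  also have "\<dots> = (\<Sum>j\<le>k. c j * (if l = j then (if l = 0 then b - a else (b - a) / 2) else 0))"
    by (subst int_h_tp) (auto intro!: continuous_intros simp: intCC intCS intS1 intC1)
  also have "\<dots> = (if l = 0 then b - a else (b - a) / 2) * c l"
    using l by (simp add: if_distrib[of "\<lambda>x. c _ * x"] sum.delta cong: if_cong)
  finally show ?thesis .
qed

lemma int_tpS: "1 \<le> l \<Longrightarrow> l \<le> k \<Longrightarrow> integral {a..b} (\<lambda>x. tp c s x * Sf l x) = (b - a) / 2 * s l"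
proof -
  assume l: "1 \<le> l" "l \<le> k"
  have "integral {a..b} (\<lambda>x. tp c s x * Sf l x) = integral {a..b} (\<lambda>x. Sf l x * tp c s x)"
    by (simp add: mult.commute)
  also have "\<dots> = (\<Sum>j\<le>k. s j * (if l = j then (b - a) / 2 else 0))"
    using l by (subst int_h_tp) (auto intro!: continuous_intros simp: intSS intSC)
  also have "\<dots> = (b - a) / 2 * s l"
    using l by (simp add: if_distrib[of "\<lambda>x. s _ * x"] sum.delta cong: if_cong)
  finally show ?thesis .
qed

lemma tp_cong: "(\<And>j. j \<le> k \<Longrightarrow> c j = c' j) \<Longrightarrow> (\<And>j. 1 \<le> j \<Longrightarrow> j \<le> k \<Longrightarrow> s j = s' j) \<Longrightarrow> tp c s = tp c' s'"
  unfolding tp_def fun_eq_iff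
  by (intro allI sum.cong refl) (metis Sf0 less_one not_less mult_zero_right atMost_iff)

lemma Cf_tp: "l \<le> k \<Longrightarrow> Cf l \<in> trig_poly a b k"
proof -
  assume l: "l \<le> k"
  have "Cf l = tp (\<lambda>j. if j = l then 1 else 0) (\<lambda>j. 0)"
    using l unfolding tp_def fun_eq_iff by (simp add: if_distrib[of "\<lambda>x. x * _"] sum.delta cong: if_cong)
  then show ?thesis unfolding tp_iff by blast
qed

lemma Sf_tp: "l \<le> k \<Longrightarrow> Sf l \<in> trig_poly a b k"
proof -
  assume l: "l \<le> k"
  have "Sf l = tp (\<lambda>j. 0) (\<lambda>j. if j = l then 1 else 0)"
    using l unfolding tp_def fun_eq_iff by (simp add: if_distrib[of "\<lambda>x. x * _"] sum.delta cong: if_cong)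
  then show ?thesis unfolding tp_iff by blast
qed

definition pc :: "(real \<Rightarrow> real) \<Rightarrow> nat \<Rightarrow> real" where
  "pc f l = (if l = 0 then 1 / (b - a) else 2 / (b - a)) * integral {a..b} (\<lambda>x. f x * Cf l x)"
definition ps :: "(real \<Rightarrow> real) \<Rightarrow> nat \<Rightarrow> real" where
  "ps f l = 2 / (b - a) * integral {a..b} (\<lambda>x. f x * Sf l x)"

lemma proj_orth:
  assumes f: "continuous_on {a..b} f"
  shows "integral {a..b} (\<lambda>x. (f x - tp (pc f) (ps f) x) * tp c s x) = 0"
proof -
  have C: "integral {a..b} (\<lambda>x. (f x - tp (pc f) (ps f) x) * Cf j x) = 0" if j: "j \<le> k" for j
  proof -
    have "integral {a..b} (\<lambda>x. (f x - tp (pc f) (ps f) x) * Cf j x) =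
       integral {a..b} (\<lambda>x. f x * Cf j x) - integral {a..b} (\<lambda>x. tp (pc f) (ps f) x * Cf j x)"
      by (subst integral_diff[symmetric]) (auto intro!: integrable_cont continuous_intros f simp: algebra_simps)
    also have "\<dots> = 0" using j ab by (simp add: int_tpC pc_def)
    finally show ?thesis .
  qed
  have S: "integral {a..b} (\<lambda>x. (f x - tp (pc f) (ps f) x) * Sf j x) = 0" if j: "j \<le> k" for j
  proof (cases "j = 0")
    case True then show ?thesis by simp
  next
    case False
    have "integral {a..b} (\<lambda>x. (f x - tp (pc f) (ps f) x) * Sf j x) =
       integral {a..b} (\<lambda>x. f x * Sf j x) - integral {a..b} (\<lambda>x. tp (pc f) (ps f) x * Sf j x)"
      by (subst integral_diff[symmetric]) (auto intro!: integrable_cont continuous_intros f simp: algebra_simps)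
    also have "\<dots> = 0" using j ab False by (simp add: int_tpS ps_def)
    finally show ?thesis .
  qed
  show ?thesis
    by (subst int_h_tp) (auto intro!: continuous_intros f simp: C S)
qed

lemma proj_eq:
  assumes f: "continuous_on {a..b} f"
  shows "L2_proj a b k f = tp (pc f) (ps f)"
  unfolding L2_proj_def
proof (rule the_equality)
  show "tp (pc f) (ps f) \<in> trig_poly a b k \<and>
    (\<forall>h\<in>trig_poly a b k. integral {a..b} (\<lambda>x. (f x - tp (pc f) (ps f) x) * h x) = 0)"
    using proj_orth[OF f] by (auto simp: tp_iff)
next
  fix g assume g: "g \<in> trig_poly a b k \<and> (\<forall>h\<in>trig_poly a b k. integral {a..b} (\<lambda>x. (f x - g x) * h x) = 0)"
  then obtain c s where gcs: "g = tp c s" unfolding tp_iff by blast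
  have C: "c j = pc f j" if j: "j \<le> k" for j
  proof -
    have "0 = integral {a..b} (\<lambda>x. (f x - g x) * Cf j x)" using g Cf_tp[OF j] by auto
    also have "\<dots> = integral {a..b} (\<lambda>x. f x * Cf j x) - integral {a..b} (\<lambda>x. tp c s x * Cf j x)"
      unfolding gcs by (subst integral_diff[symmetric]) (auto intro!: integrable_cont continuous_intros f simp: algebra_simps)
    finally have "integral {a..b} (\<lambda>x. tp c s x * Cf j x) = integral {a..b} (\<lambda>x. f x * Cf j x)" by simp
    then have "(if j = 0 then b - a else (b - a) / 2) * c j = integral {a..b} (\<lambda>x. f x * Cf j x)"
      unfolding int_tpC[OF j] .
    then show ?thesis using ab by (auto simp: pc_def field_simps split: if_splits)
  qed
  have S: "s j = ps f j" if j: "1 \<le> j" "j \<le> k" for j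
  proof -
    have "0 = integral {a..b} (\<lambda>x. (f x - g x) * Sf j x)" using g Sf_tp[OF j(2)] by auto
    also have "\<dots> = integral {a..b} (\<lambda>x. f x * Sf j x) - integral {a..b} (\<lambda>x. tp c s x * Sf j x)"
      unfolding gcs by (subst integral_diff[symmetric]) (auto intro!: integrable_cont continuous_intros f simp: algebra_simps)
    finally have "integral {a..b} (\<lambda>x. tp c s x * Sf j x) = integral {a..b} (\<lambda>x. f x * Sf j x)" by simp
    then have "(b - a) / 2 * s j = integral {a..b} (\<lambda>x. f x * Sf j x)"
      unfolding int_tpS[OF j] .
    then show ?thesis using ab by (auto simp: ps_def field_simps)
  qed
  show "g = tp (pc f) (ps f)" unfolding gcs by (rule tp_cong) (use C S in auto)
qed

lemma proj_prop:
  assumes f: "continuous_on {a..b} f" and h: "h \<in> trig_poly a b k"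
  shows "integral {a..b} (\<lambda>x. L2_proj a b k f x * h x) = integral {a..b} (\<lambda>x. f x * h x)"
proof -
  obtain c s where hcs: "h = tp c s" using h unfolding tp_iff by blast
  have "0 = integral {a..b} (\<lambda>x. (f x - L2_proj a b k f x) * h x)"
    using proj_orth[OF f] unfolding proj_eq[OF f] hcs by simp
  also have "\<dots> = integral {a..b} (\<lambda>x. f x * h x) - integral {a..b} (\<lambda>x. L2_proj a b k f x * h x)"
    unfolding proj_eq[OF f] hcs
    by (subst integral_diff[symmetric]) (auto intro!: integrable_cont continuous_intros f simp: algebra_simps)
  finally show ?thesis by simp
qed

definition NN :: nat where "NN = 2 * k + 1"
definition pt :: "nat \<Rightarrow> real" where "pt m = a + real m * (b - a) / real NN"

lemma NN_pos: "NN > 0" by (simp add: NN_def)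

lemma pt_arg: "2 * pi * real j * (pt m - a) / (b - a) = 2 * pi * real j * real m / real NN"
  unfolding pt_def using ab NN_pos by (simp add: field_simps)
lemma Cf_pt: "Cf j (pt m) = cos (2 * pi * real j * real m / real NN)"
  unfolding Cf_def pt_arg ..
lemma Sf_pt: "Sf j (pt m) = sin (2 * pi * real j * real m / real NN)"
  unfolding Sf_def pt_arg ..

lemma pt_in: "m < NN \<Longrightarrow> pt m \<in> {a..b}"
proof -
  assume m: "m < NN"
  have "real m * (b - a) \<le> real NN * (b - a)" using m ab by (intro mult_right_mono) auto
  then have "real m * (b - a) / real NN \<le> real NN * (b - a) / real NN"
    using NN_pos by (intro divide_right_mono) auto
  then have "real m * (b - a) / real NN \<le> (b - a)" using NN_pos by simp
  moreover have "real m * (b - a) / real NN \<ge> 0" using ab by simp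
  ultimately show ?thesis unfolding pt_def by auto
qed

lemma geo_cis:
  assumes p: "\<bar>p\<bar> < int NN" "p \<noteq> 0"
  shows "(\<Sum>m<NN. cis (2 * pi * of_int p / real NN) ^ m) = 0"
proof -
  define z where "z = cis (2 * pi * of_int p / real NN)"
  have zN: "z ^ NN = 1" unfolding z_def Complex.DeMoivre using NN_pos
    by (simp add: cis.ctr complex_eq_iff)
  have z1: "z \<noteq> 1"
  proof
    assume "z = 1"
    then have "cos (2 * pi * of_int p / real NN) = 1" unfolding z_def by (metis cis.sel(1) one_complex.sel(1))
    then obtain n :: int where n: "2 * pi * of_int p / real NN = of_int n * 2 * pi" by (auto simp: cos_one_2pi_int)
    then have "of_int p = of_int n * real NN" using NN_pos by (simp add: field_simps)
    then have pn: "p = n * int NN" by (metis of_int_eq_iff of_int_mult of_int_of_nat_eq)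
    show False
    proof (cases "n = 0")
      case True then show ?thesis using pn p by simp
    next
      case False
      then have "\<bar>n\<bar> \<ge> 1" by simp
      then have "\<bar>p\<bar> \<ge> int NN" unfolding pn abs_mult by (simp add: mult_le_cancel_right1)
      then show ?thesis using p by simp
    qed
  qed
  show ?thesis unfolding z_def[symmetric] sum_gp_strict using z1 zN by simp
qed

lemma dsum_cos: "\<bar>p\<bar> < int NN \<Longrightarrow> (\<Sum>m<NN. cos (2 * pi * of_int p * real m / real NN)) = (if p = 0 then real NN else 0)"
proof (cases "p = 0")
  case False
  assume p: "\<bar>p\<bar> < int NN"
  have "(\<Sum>m<NN. cos (2 * pi * of_int p * real m / real NN)) = Re (\<Sum>m<NN. cis (2 * pi * of_int p / real NN) ^ m)"
    unfolding Re_sum Complex.DeMoivre by (intro sum.cong refl) (simp add: field_simps)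
  then show ?thesis using geo_cis[OF p False] False by simp
qed simp

lemma dsum_sin: "\<bar>p\<bar> < int NN \<Longrightarrow> (\<Sum>m<NN. sin (2 * pi * of_int p * real m / real NN)) = 0"
proof (cases "p = 0")
  case False
  assume p: "\<bar>p\<bar> < int NN"
  have "(\<Sum>m<NN. sin (2 * pi * of_int p * real m / real NN)) = Im (\<Sum>m<NN. cis (2 * pi * of_int p / real NN) ^ m)"
    unfolding Im_sum Complex.DeMoivre by (intro sum.cong refl) (simp add: field_simps)
  then show ?thesis using geo_cis[OF p False] by simp
qed simp

lemma dCC: "j \<le> k \<Longrightarrow> l \<le> k \<Longrightarrow> (\<Sum>m<NN. Cf j (pt m) * Cf l (pt m)) =
   (if j = l then (if j = 0 then real NN else real NN / 2) else 0)"
proof -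
  assume jl: "j \<le> k" "l \<le> k"
  have "Cf j (pt m) * Cf l (pt m) = (cos (2 * pi * of_int (int j - int l) * real m / real NN) + cos (2 * pi * of_int (int j + int l) * real m / real NN)) / 2" for m
    unfolding Cf_pt cos_times_cos by (simp add: algebra_simps add_divide_distrib diff_divide_distrib)
  then have "(\<Sum>m<NN. Cf j (pt m) * Cf l (pt m)) = (\<Sum>m<NN. (cos (2 * pi * of_int (int j - int l) * real m / real NN) + cos (2 * pi * of_int (int j + int l) * real m / real NN)) / 2)"
    by (intro sum.cong refl)
  also have "\<dots> = ((\<Sum>m<NN. cos (2 * pi * of_int (int j - int l) * real m / real NN)) + (\<Sum>m<NN. cos (2 * pi * of_int (int j + int l) * real m / real NN))) / 2"
    by (simp only: sum_divide_distrib[symmetric] sum.distrib)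
  also have "\<dots> = (if j = l then (if j = 0 then real NN else real NN / 2) else 0)"
    using jl by (subst dsum_cos, simp add: NN_def, subst dsum_cos) (auto simp: NN_def)
  finally show ?thesis .
qed

lemma dSS: "j \<le> k \<Longrightarrow> l \<le> k \<Longrightarrow> (\<Sum>m<NN. Sf j (pt m) * Sf l (pt m)) =
   (if j = l \<and> j \<noteq> 0 then real NN / 2 else 0)"
proof -
  assume jl: "j \<le> k" "l \<le> k"
  have "Sf j (pt m) * Sf l (pt m) = (cos (2 * pi * of_int (int j - int l) * real m / real NN) - cos (2 * pi * of_int (int j + int l) * real m / real NN)) / 2" for m
    unfolding Sf_pt sin_times_sin by (simp add: algebra_simps add_divide_distrib diff_divide_distrib)
  then have "(\<Sum>m<NN. Sf j (pt m) * Sf l (pt m)) = (\<Sum>m<NN. (cos (2 * pi * of_int (int j - int l) * real m / real NN) - cos (2 * pi * of_int (int j + int l) * real m / real NN)) / 2)"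
    by (intro sum.cong refl)
  also have "\<dots> = ((\<Sum>m<NN. cos (2 * pi * of_int (int j - int l) * real m / real NN)) - (\<Sum>m<NN. cos (2 * pi * of_int (int j + int l) * real m / real NN))) / 2"
    by (simp only: sum_divide_distrib[symmetric] sum_subtractf)
  also have "\<dots> = (if j = l \<and> j \<noteq> 0 then real NN / 2 else 0)"
    using jl by (subst dsum_cos, simp add: NN_def, subst dsum_cos) (auto simp: NN_def)
  finally show ?thesis .
qed

lemma dSC: "j \<le> k \<Longrightarrow> l \<le> k \<Longrightarrow> (\<Sum>m<NN. Sf j (pt m) * Cf l (pt m)) = 0"
proof -
  assume jl: "j \<le> k" "l \<le> k"
  have "Sf j (pt m) * Cf l (pt m) = (sin (2 * pi * of_int (int j + int l) * real m / real NN) + sin (2 * pi * of_int (int j - int l) * real m / real NN)) / 2" for m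
    unfolding Sf_pt Cf_pt sin_times_cos by (simp add: algebra_simps add_divide_distrib diff_divide_distrib)
  then have "(\<Sum>m<NN. Sf j (pt m) * Cf l (pt m)) = (\<Sum>m<NN. (sin (2 * pi * of_int (int j + int l) * real m / real NN) + sin (2 * pi * of_int (int j - int l) * real m / real NN)) / 2)"
    by (intro sum.cong refl)
  also have "\<dots> = ((\<Sum>m<NN. sin (2 * pi * of_int (int j + int l) * real m / real NN)) + (\<Sum>m<NN. sin (2 * pi * of_int (int j - int l) * real m / real NN))) / 2"
    by (simp only: sum_divide_distrib[symmetric] sum.distrib)
  also have "\<dots> = 0"
    using jl by (subst dsum_sin, simp add: NN_def, subst dsum_sin) (auto simp: NN_def)
  finally show ?thesis .
qed

lemma dCS: "j \<le> k \<Longrightarrow> l \<le> k \<Longrightarrow> (\<Sum>m<NN. Cf j (pt m) * Sf l (pt m)) = 0"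
  using dSC[of l j] by (simp add: mult.commute)

lemma dsum_h_tp: "(\<Sum>m<NN. h m * tp c s (pt m)) =
   (\<Sum>j\<le>k. c j * (\<Sum>m<NN. h m * Cf j (pt m)) + s j * (\<Sum>m<NN. h m * Sf j (pt m)))"
  unfolding tp_def sum_distrib_left
  by (subst sum.swap) (simp add: sum.distrib algebra_simps sum_distrib_left)

definition dc :: "(real \<Rightarrow> real) \<Rightarrow> nat \<Rightarrow> real" where
  "dc g l = (if l = 0 then 1 / real NN else 2 / real NN) * (\<Sum>m<NN. g (pt m) * Cf l (pt m))"
definition dsn :: "(real \<Rightarrow> real) \<Rightarrow> nat \<Rightarrow> real" where
  "dsn g l = 2 / real NN * (\<Sum>m<NN. g (pt m) * Sf l (pt m))"

lemma dc_tp: "l \<le> k \<Longrightarrow> dc (tp c s) l = c l"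
proof -
  assume l: "l \<le> k"
  have "(\<Sum>m<NN. tp c s (pt m) * Cf l (pt m)) = (\<Sum>m<NN. Cf l (pt m) * tp c s (pt m))"
    by (simp add: mult.commute)
  also have "\<dots> = (\<Sum>j\<le>k. c j * (if l = j then (if l = 0 then real NN else real NN / 2) else 0))"
    unfolding dsum_h_tp using l by (intro sum.cong refl) (simp add: dCC dCS)
  also have "\<dots> = (if l = 0 then real NN else real NN / 2) * c l"
    using l by (simp add: if_distrib[of "\<lambda>x. c _ * x"] sum.delta cong: if_cong)
  finally show ?thesis unfolding dc_def using NN_pos by auto
qed

lemma dsn_tp: "1 \<le> l \<Longrightarrow> l \<le> k \<Longrightarrow> dsn (tp c s) l = s l"
proof -
  assume l: "1 \<le> l" "l \<le> k"
  have "(\<Sum>m<NN. tp c s (pt m) * Sf l (pt m)) = (\<Sum>m<NN. Sf l (pt m) * tp c s (pt m))"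
    by (simp add: mult.commute)
  also have "\<dots> = (\<Sum>j\<le>k. s j * (if l = j then real NN / 2 else 0))"
    unfolding dsum_h_tp using l by (intro sum.cong refl) (auto simp: dSS dSC)
  also have "\<dots> = real NN / 2 * s l"
    using l by (simp add: if_distrib[of "\<lambda>x. s _ * x"] sum.delta cong: if_cong)
  finally show ?thesis unfolding dsn_def using NN_pos by (simp add: field_simps)
qed

lemma tp_dc: "g \<in> trig_poly a b k \<Longrightarrow> g = tp (dc g) (dsn g)"
proof -
  assume "g \<in> trig_poly a b k"
  then obtain c s where g: "g = tp c s" unfolding tp_iff by blast
  show ?thesis unfolding g by (rule tp_cong) (auto simp: dc_tp dsn_tp)
qed

lemma per_zero:
  assumes d: "\<And>x. (g has_real_derivative g' x) (at x)" and c: "continuous_on {a..b} g'"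
    and p: "g b = g a"
  shows "integral {a..b} g' = 0"
proof -
  have "(g' has_integral (g b - g a)) {a..b}"
    using ab by (intro fundamental_theorem_of_calculus)
      (auto intro: has_field_derivative_at_within simp: has_real_derivative_iff_has_vector_derivative[symmetric] d)
  then show ?thesis using p by (simp add: integral_unique)
qed

lemma ibp: "integral {a..b} (\<lambda>x. tp (dco s) (dsi c) x * tp c2 s2 x) =
   - integral {a..b} (\<lambda>x. tp c s x * tp (dco s2) (dsi c2) x)"
proof -
  have "integral {a..b} (\<lambda>x. tp (dco s) (dsi c) x * tp c2 s2 x + tp c s x * tp (dco s2) (dsi c2) x) = 0"
    by (rule per_zero[where g="\<lambda>x. tp c s x * tp c2 s2 x"])
      (auto intro!: derivative_eq_intros tp_deriv continuous_intros simp: tp_per)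
  then show ?thesis
    by (subst (asm) integral_add) (auto intro!: integrable_cont continuous_intros)
qed

lemma proj_tp:
  assumes f: "continuous_on {a..b} f"
  shows "integral {a..b} (\<lambda>x. tp (pc f) (ps f) x * tp c s x) = integral {a..b} (\<lambda>x. f x * tp c s x)"
  using proj_prop[OF f, of "tp c s"] unfolding proj_eq[OF f] tp_iff by blast

lemmas csimps = continuous_on_add continuous_on_mult continuous_on_diff continuous_on_minus
  continuous_on_const continuous_on_power tp_cont integrable_cont

end

context tpl begin

lemma static_mass:
  fixes cV sV cW sW cV' sV' cW' sW' :: "nat \<Rightarrow> real" and \<beta> :: real
  defines "V \<equiv> tp cV sV" and "W \<equiv> tp cW sW"
  defines "f1 \<equiv> \<lambda>y. ((V y)\<^sup>2 + (W y)\<^sup>2) * W y" and "f2 \<equiv> \<lambda>y. ((V y)\<^sup>2 + (W y)\<^sup>2) * V y"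
  assumes eV: "\<And>x. tp cV' sV' x = - tp (dco (dsi cW)) (dsi (dco sW)) x - \<beta> * tp (pc f1) (ps f1) x"
  and eW: "\<And>x. tp cW' sW' x = tp (dco (dsi cV)) (dsi (dco sV)) x + \<beta> * tp (pc f2) (ps f2) x"
  shows "integral {a..b} (\<lambda>x. 2 * V x * tp cV' sV' x + 2 * W x * tp cW' sW' x) = 0"
proof -
  have cf1: "continuous_on {a..b} f1" unfolding f1_def V_def W_def by (intro continuous_intros)
  have cf2: "continuous_on {a..b} f2" unfolding f2_def V_def W_def by (intro continuous_intros)
  have i1: "integral {a..b} (\<lambda>x. V x * tp (dco (dsi cW)) (dsi (dco sW)) x) =
     integral {a..b} (\<lambda>x. W x * tp (dco (dsi cV)) (dsi (dco sV)) x)"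
    using ibp[of "dsi cW" "dco sW" cV sV] ibp[of "dsi cV" "dco sV" cW sW]
    unfolding V_def W_def by (simp add: mult.commute)
  have i2: "integral {a..b} (\<lambda>x. V x * tp (pc f1) (ps f1) x) = integral {a..b} (\<lambda>x. W x * tp (pc f2) (ps f2) x)"
    using proj_tp[OF cf1, of cV sV] proj_tp[OF cf2, of cW sW]
    unfolding V_def W_def f1_def f2_def by (simp add: mult.commute mult.left_commute)
  have "integral {a..b} (\<lambda>x. 2 * V x * tp cV' sV' x + 2 * W x * tp cW' sW' x) =
     2 * (- integral {a..b} (\<lambda>x. V x * tp (dco (dsi cW)) (dsi (dco sW)) x) - \<beta> * integral {a..b} (\<lambda>x. V x * tp (pc f1) (ps f1) x))
     + 2 * (integral {a..b} (\<lambda>x. W x * tp (dco (dsi cV)) (dsi (dco sV)) x) + \<beta> * integral {a..b} (\<lambda>x. W x * tp (pc f2) (ps f2) x))"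
    unfolding eV eW V_def W_def by (simp add: algebra_simps integral_add integral_diff csimps)
  then show ?thesis using i1 i2 by simp
qed


lemma int_pmm:
  fixes A B C D :: "real \<Rightarrow> real"
  assumes "continuous_on {a..b} A" "continuous_on {a..b} B" "continuous_on {a..b} C" "continuous_on {a..b} D"
  shows "integral {a..b} (\<lambda>x. A x + B x - C x - D x) =
    integral {a..b} A + integral {a..b} B - integral {a..b} C - integral {a..b} D"
  using assms by (simp add: integral_add integral_diff integrable_cont continuous_intros)

lemma int_mm:
  fixes A B :: "real \<Rightarrow> real"
  assumes "continuous_on {a..b} A" "continuous_on {a..b} B"
  shows "integral {a..b} (\<lambda>x. - A x - c * B x) = - integral {a..b} A - c * integral {a..b} B"
  using assms by (simp add: integral_add integral_diff integrable_cont continuous_intros)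

lemma int_pp:
  fixes A B :: "real \<Rightarrow> real"
  assumes "continuous_on {a..b} A" "continuous_on {a..b} B"
  shows "integral {a..b} (\<lambda>x. A x + c * B x) = integral {a..b} A + c * integral {a..b} B"
  using assms by (simp add: integral_add integral_diff integrable_cont continuous_intros)

lemma int_p:
  fixes A B :: "real \<Rightarrow> real"
  assumes "continuous_on {a..b} A" "continuous_on {a..b} B"
  shows "integral {a..b} (\<lambda>x. A x + B x) = integral {a..b} A + integral {a..b} B"
  using assms by (simp add: integral_add integrable_cont)

lemma int_comm: "integral {a..b} (\<lambda>x. (f::real\<Rightarrow>real) x * g x) = integral {a..b} (\<lambda>x. g x * f x)"
  by (simp add: mult.commute)

lemma poly_id: "2 * ((v::real)\<^sup>2 + w\<^sup>2) * (2 * v * vx + 2 * w * wx) / 4 = ((v\<^sup>2 + w\<^sup>2) * w) * wx + ((v\<^sup>2 + w\<^sup>2) * v) * vx"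
  by (simp add: algebra_simps power2_eq_square)

lemma static_mom:
  fixes cV sV cW sW cV' sV' cW' sW' :: "nat \<Rightarrow> real" and \<beta> :: real
  defines "V \<equiv> tp cV sV" and "W \<equiv> tp cW sW"
  defines "f1 \<equiv> \<lambda>y. ((V y)\<^sup>2 + (W y)\<^sup>2) * W y" and "f2 \<equiv> \<lambda>y. ((V y)\<^sup>2 + (W y)\<^sup>2) * V y"
  assumes eV: "\<And>x. tp cV' sV' x = - tp (dco (dsi cW)) (dsi (dco sW)) x - \<beta> * tp (pc f1) (ps f1) x"
  and eW: "\<And>x. tp cW' sW' x = tp (dco (dsi cV)) (dsi (dco sV)) x + \<beta> * tp (pc f2) (ps f2) x"
  shows "integral {a..b} (\<lambda>x. tp cV' sV' x * tp (dco sW) (dsi cW) x + V x * tp (dco sW') (dsi cW') x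
      - tp cW' sW' x * tp (dco sV) (dsi cV) x - W x * tp (dco sV') (dsi cV') x) = 0"
proof -
  define Vx where "Vx = tp (dco sV) (dsi cV)"
  define Wx where "Wx = tp (dco sW) (dsi cW)"
  define Vxx where "Vxx = tp (dco (dsi cV)) (dsi (dco sV))"
  define Wxx where "Wxx = tp (dco (dsi cW)) (dsi (dco sW))"
  define P1 where "P1 = tp (pc f1) (ps f1)"
  define P2 where "P2 = tp (pc f2) (ps f2)"
  define V' where "V' = tp cV' sV'"
  define W' where "W' = tp cW' sW'"
  have cf1: "continuous_on {a..b} f1" unfolding f1_def V_def W_def by (intro continuous_intros)
  have cf2: "continuous_on {a..b} f2" unfolding f2_def V_def W_def by (intro continuous_intros)
  note defs = Vx_def Wx_def Vxx_def Wxx_def P1_def P2_def V'_def W'_def V_def W_def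
  have j1: "integral {a..b} (\<lambda>x. V x * tp (dco sW') (dsi cW') x) = - integral {a..b} (\<lambda>x. W' x * Vx x)"
    unfolding V_def W'_def Vx_def ibp[symmetric] by (rule int_comm)
  have j2: "integral {a..b} (\<lambda>x. W x * tp (dco sV') (dsi cV') x) = - integral {a..b} (\<lambda>x. V' x * Wx x)"
    unfolding W_def V'_def Wx_def ibp[symmetric] by (rule int_comm)
  have z1: "integral {a..b} (\<lambda>x. Wxx x * Wx x) = 0"
    using ibp[of "dsi cW" "dco sW" "dco sW" "dsi cW"] int_comm[of Wx Wxx] unfolding Wxx_def Wx_def by linarith
  have z2: "integral {a..b} (\<lambda>x. Vxx x * Vx x) = 0"
    using ibp[of "dsi cV" "dco sV" "dco sV" "dsi cV"] int_comm[of Vx Vxx] unfolding Vxx_def Vx_def by linarith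
  have p1: "integral {a..b} (\<lambda>x. P1 x * Wx x) = integral {a..b} (\<lambda>x. f1 x * Wx x)"
    unfolding P1_def Wx_def by (rule proj_tp[OF cf1])
  have p2: "integral {a..b} (\<lambda>x. P2 x * Vx x) = integral {a..b} (\<lambda>x. f2 x * Vx x)"
    unfolding P2_def Vx_def by (rule proj_tp[OF cf2])
  have gd: "((\<lambda>x. ((V x)\<^sup>2 + (W x)\<^sup>2)\<^sup>2 / 4) has_real_derivative
      (2 * ((V x)\<^sup>2 + (W x)\<^sup>2) * (2 * V x * Vx x + 2 * W x * Wx x) / 4)) (at x)" for x
    unfolding V_def W_def Vx_def Wx_def
    by (rule derivative_eq_intros tp_deriv refl | simp add: algebra_simps)+
  have nl: "integral {a..b} (\<lambda>x. f1 x * Wx x + f2 x * Vx x) = 0"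
    unfolding f1_def f2_def poly_id[symmetric]
    by (rule per_zero[OF gd]) (auto intro!: continuous_intros simp: V_def W_def Vx_def Wx_def tp_per)
  have nl': "integral {a..b} (\<lambda>x. f1 x * Wx x) + integral {a..b} (\<lambda>x. f2 x * Vx x) = 0"
    using nl by (subst (asm) int_p) (auto intro!: continuous_intros cf1 cf2 simp: defs)
  have e1: "(\<lambda>x. V' x * Wx x) = (\<lambda>x. - (Wxx x * Wx x) - \<beta> * (P1 x * Wx x))"
    by (rule ext) (simp add: V'_def eV Wxx_def P1_def algebra_simps)
  have e2: "(\<lambda>x. W' x * Vx x) = (\<lambda>x. Vxx x * Vx x + \<beta> * (P2 x * Vx x))"
    by (rule ext) (simp add: W'_def eW Vxx_def P2_def algebra_simps)
  have s1: "integral {a..b} (\<lambda>x. V' x * Wx x) = - \<beta> * integral {a..b} (\<lambda>x. f1 x * Wx x)"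
  proof -
    have "integral {a..b} (\<lambda>x. - (Wxx x * Wx x) - \<beta> * (P1 x * Wx x)) = - integral {a..b} (\<lambda>x. Wxx x * Wx x) - \<beta> * integral {a..b} (\<lambda>x. P1 x * Wx x)"
      by (rule int_mm) (auto intro!: continuous_intros simp: defs)
    then show ?thesis unfolding e1 z1 p1 by simp
  qed
  have s2: "integral {a..b} (\<lambda>x. W' x * Vx x) = \<beta> * integral {a..b} (\<lambda>x. f2 x * Vx x)"
  proof -
    have "integral {a..b} (\<lambda>x. Vxx x * Vx x + \<beta> * (P2 x * Vx x)) = integral {a..b} (\<lambda>x. Vxx x * Vx x) + \<beta> * integral {a..b} (\<lambda>x. P2 x * Vx x)"
      by (rule int_pp) (auto intro!: continuous_intros simp: defs)
    then show ?thesis unfolding e2 z2 p2 by simp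
  qed
  have "integral {a..b} (\<lambda>x. tp cV' sV' x * tp (dco sW) (dsi cW) x + V x * tp (dco sW') (dsi cW') x
      - tp cW' sW' x * tp (dco sV) (dsi cV) x - W x * tp (dco sV') (dsi cV') x) =
     integral {a..b} (\<lambda>x. V' x * Wx x) + integral {a..b} (\<lambda>x. V x * tp (dco sW') (dsi cW') x)
      - integral {a..b} (\<lambda>x. W' x * Vx x) - integral {a..b} (\<lambda>x. W x * tp (dco sV') (dsi cV') x)"
    unfolding V'_def W'_def Vx_def Wx_def by (rule int_pmm) (auto intro!: continuous_intros simp: V_def W_def)
  also have "\<dots> = - (2 * \<beta>) * (integral {a..b} (\<lambda>x. f1 x * Wx x) + integral {a..b} (\<lambda>x. f2 x * Vx x))"
    unfolding j1 j2 s1 s2 by (simp add: algebra_simps)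
  also have "\<dots> = 0" using nl' by simp
  finally show ?thesis .
qed

lemma arith_en: "(x::real) = a1 + \<beta> * b1 \<Longrightarrow> y = - a2 - \<beta> * b2 \<Longrightarrow> y = x \<Longrightarrow>
  2 * - a1 + 2 * - a2 - 2 * \<beta> * b1 - 2 * \<beta> * b2 = 0"
  by (simp add: algebra_simps)

lemma int4:
  fixes A B C D :: "real \<Rightarrow> real"
  assumes "continuous_on {a..b} A" "continuous_on {a..b} B" "continuous_on {a..b} C" "continuous_on {a..b} D"
  shows "integral {a..b} (\<lambda>x. 2 * A x + 2 * B x - c * C x - c * D x) =
    2 * integral {a..b} A + 2 * integral {a..b} B - c * integral {a..b} C - c * integral {a..b} D"
  using assms by (simp add: integral_add integral_diff integrable_cont continuous_intros)

lemma static_en: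
  fixes cV sV cW sW cV' sV' cW' sW' :: "nat \<Rightarrow> real" and \<beta> :: real
  defines "V \<equiv> tp cV sV" and "W \<equiv> tp cW sW"
  defines "f1 \<equiv> \<lambda>y. ((V y)\<^sup>2 + (W y)\<^sup>2) * W y" and "f2 \<equiv> \<lambda>y. ((V y)\<^sup>2 + (W y)\<^sup>2) * V y"
  assumes eV: "\<And>x. tp cV' sV' x = - tp (dco (dsi cW)) (dsi (dco sW)) x - \<beta> * tp (pc f1) (ps f1) x"
  and eW: "\<And>x. tp cW' sW' x = tp (dco (dsi cV)) (dsi (dco sV)) x + \<beta> * tp (pc f2) (ps f2) x"
  shows "integral {a..b} (\<lambda>x. 2 * tp (dco sV) (dsi cV) x * tp (dco sV') (dsi cV') x
      + 2 * tp (dco sW) (dsi cW) x * tp (dco sW') (dsi cW') x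
      - 2 * \<beta> * ((V x)\<^sup>2 + (W x)\<^sup>2) * (V x * tp cV' sV' x + W x * tp cW' sW' x)) = 0"
proof -
  define Vx where "Vx = tp (dco sV) (dsi cV)"
  define Wx where "Wx = tp (dco sW) (dsi cW)"
  define V'x where "V'x = tp (dco sV') (dsi cV')"
  define W'x where "W'x = tp (dco sW') (dsi cW')"
  define Vxx where "Vxx = tp (dco (dsi cV)) (dsi (dco sV))"
  define Wxx where "Wxx = tp (dco (dsi cW)) (dsi (dco sW))"
  define P1 where "P1 = tp (pc f1) (ps f1)"
  define P2 where "P2 = tp (pc f2) (ps f2)"
  define V' where "V' = tp cV' sV'"
  define W' where "W' = tp cW' sW'"
  have cf1: "continuous_on {a..b} f1" unfolding f1_def V_def W_def by (intro continuous_intros)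
  have cf2: "continuous_on {a..b} f2" unfolding f2_def V_def W_def by (intro continuous_intros)
  note defs = Vx_def Wx_def V'x_def W'x_def Vxx_def Wxx_def P1_def P2_def V'_def W'_def V_def W_def
  have j1: "integral {a..b} (\<lambda>x. Vx x * V'x x) = - integral {a..b} (\<lambda>x. Vxx x * V' x)"
    unfolding Vx_def V'x_def Vxx_def V'_def ibp by simp
  have j2: "integral {a..b} (\<lambda>x. Wx x * W'x x) = - integral {a..b} (\<lambda>x. Wxx x * W' x)"
    unfolding Wx_def W'x_def Wxx_def W'_def ibp by simp
  have p1: "integral {a..b} (\<lambda>x. P1 x * W' x) = integral {a..b} (\<lambda>x. f1 x * W' x)"
    unfolding P1_def W'_def by (rule proj_tp[OF cf1])
  have p2: "integral {a..b} (\<lambda>x. P2 x * V' x) = integral {a..b} (\<lambda>x. f2 x * V' x)"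
    unfolding P2_def V'_def by (rule proj_tp[OF cf2])
  have e1: "(\<lambda>x. W' x * V' x) = (\<lambda>x. Vxx x * V' x + \<beta> * (P2 x * V' x))"
    by (rule ext) (simp add: W'_def eW Vxx_def P2_def algebra_simps)
  have e2: "(\<lambda>x. V' x * W' x) = (\<lambda>x. - (Wxx x * W' x) - \<beta> * (P1 x * W' x))"
    by (rule ext) (simp add: V'_def eV Wxx_def P1_def algebra_simps)
  have q1: "integral {a..b} (\<lambda>x. W' x * V' x) = integral {a..b} (\<lambda>x. Vxx x * V' x) + \<beta> * integral {a..b} (\<lambda>x. P2 x * V' x)"
    unfolding e1 by (rule int_pp) (auto intro!: continuous_intros simp: defs)
  have q2: "integral {a..b} (\<lambda>x. V' x * W' x) = - integral {a..b} (\<lambda>x. Wxx x * W' x) - \<beta> * integral {a..b} (\<lambda>x. P1 x * W' x)"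
    unfolding e2 by (rule int_mm) (auto intro!: continuous_intros simp: defs)
  have q3: "integral {a..b} (\<lambda>x. V' x * W' x) = integral {a..b} (\<lambda>x. W' x * V' x)"
    by (rule int_comm)
  have eq: "(\<lambda>x. 2 * tp (dco sV) (dsi cV) x * tp (dco sV') (dsi cV') x
      + 2 * tp (dco sW) (dsi cW) x * tp (dco sW') (dsi cW') x
      - 2 * \<beta> * ((V x)\<^sup>2 + (W x)\<^sup>2) * (V x * tp cV' sV' x + W x * tp cW' sW' x)) =
      (\<lambda>x. 2 * (Vx x * V'x x) + 2 * (Wx x * W'x x) - (2 * \<beta>) * (f2 x * V' x) - (2 * \<beta>) * (f1 x * W' x))"
    unfolding f1_def f2_def Vx_def V'x_def Wx_def W'x_def V'_def W'_def by (rule ext) (simp add: algebra_simps)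
  have "integral {a..b} (\<lambda>x. 2 * (Vx x * V'x x) + 2 * (Wx x * W'x x) - (2 * \<beta>) * (f2 x * V' x) - (2 * \<beta>) * (f1 x * W' x))
     = 2 * integral {a..b} (\<lambda>x. Vx x * V'x x) + 2 * integral {a..b} (\<lambda>x. Wx x * W'x x)
       - (2 * \<beta>) * integral {a..b} (\<lambda>x. f2 x * V' x) - (2 * \<beta>) * integral {a..b} (\<lambda>x. f1 x * W' x)"
    by (rule int4) (auto intro!: continuous_intros cf1 cf2 simp: defs)
  also have "\<dots> = 0"
    unfolding j1 j2 p1[symmetric] p2[symmetric] mult.assoc[of 2 \<beta>, symmetric] by (rule arith_en[OF q1 q2 q3])
  finally show ?thesis unfolding eq .
qed

end

context tpl begin


lemma dc_deriv:
  assumes "\<And>x. ((\<lambda>s. g s x) has_real_derivative g' x) (at t)"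
  shows "((\<lambda>s. dc (g s) l) has_real_derivative dc g' l) (at t)"
  unfolding dc_def by (intro DERIV_cmult DERIV_sum DERIV_cmult_right assms)

lemma dsn_deriv:
  assumes "\<And>x. ((\<lambda>s. g s x) has_real_derivative g' x) (at t)"
  shows "((\<lambda>s. dsn (g s) l) has_real_derivative dsn g' l) (at t)"
  unfolding dsn_def by (intro DERIV_cmult DERIV_sum DERIV_cmult_right assms)

lemma dc_cont:
  assumes "\<And>x. continuous_on I (\<lambda>s. g s x)"
  shows "continuous_on I (\<lambda>s. dc (g s) l)"
  unfolding dc_def by (intro continuous_intros assms)

lemma dsn_cont:
  assumes "\<And>x. continuous_on I (\<lambda>s. g s x)"
  shows "continuous_on I (\<lambda>s. dsn (g s) l)"
  unfolding dsn_def by (intro continuous_intros assms)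

lemma tp_dt:
  assumes "\<And>j. ((\<lambda>t. c t j) has_real_derivative c' j) (at t within U)"
    "\<And>j. ((\<lambda>t. s t j) has_real_derivative s' j) (at t within U)"
  shows "((\<lambda>t. tp (c t) (s t) x) has_real_derivative tp c' s' x) (at t within U)"
  unfolding tp_def by (intro DERIV_sum DERIV_add DERIV_cmult_right assms)

lemma dco_dt:
  assumes "((\<lambda>t. s t j) has_real_derivative s' j) (at t within U)"
  shows "((\<lambda>t. dco (s t) j) has_real_derivative dco s' j) (at t within U)"
  unfolding dco_def using DERIV_cmult[OF assms, of "real j * om"] by simp

lemma dsi_dt:
  assumes "((\<lambda>t. s t j) has_real_derivative s' j) (at t within U)"
  shows "((\<lambda>t. dsi (s t) j) has_real_derivative dsi s' j) (at t within U)"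
  unfolding dsi_def using DERIV_cmult[OF assms, of "- (real j * om)"] by simp

lemma tp_jcont:
  assumes "\<And>j. continuous_on U (\<lambda>t. c t j)" "\<And>j. continuous_on U (\<lambda>t. s t j)"
  shows "continuous_on (U \<times> X) (\<lambda>p. tp (c (fst p)) (s (fst p)) (snd p))"
proof -
  have c: "continuous_on (U \<times> X) (\<lambda>p. c (fst p) j)" for j
    by (rule continuous_on_compose2[OF assms(1) continuous_on_fst]) auto
  have s: "continuous_on (U \<times> X) (\<lambda>p. s (fst p) j)" for j
    by (rule continuous_on_compose2[OF assms(2) continuous_on_fst]) auto
  have C: "continuous_on (U \<times> X) (\<lambda>p. Cf j (snd p))" for j
    by (rule continuous_on_compose2[OF Cf_cont continuous_on_snd]) auto
  have S: "continuous_on (U \<times> X) (\<lambda>p. Sf j (snd p))" for j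
    by (rule continuous_on_compose2[OF Sf_cont continuous_on_snd]) auto
  show ?thesis unfolding tp_def
    by (intro continuous_on_sum continuous_on_add continuous_on_mult c s C S)
qed

lemma leib_const:
  fixes F Fx :: "real \<Rightarrow> real \<Rightarrow> real"
  assumes I: "convex I"
    and d: "\<And>t x. t \<in> I \<Longrightarrow> ((\<lambda>t. F t x) has_real_derivative Fx t x) (at t within I)"
    and c: "\<And>t. t \<in> I \<Longrightarrow> continuous_on {a..b} (F t)"
    and cx: "continuous_on (I \<times> {a..b}) (\<lambda>(t, x). Fx t x)"
    and z: "\<And>t. t \<in> I \<Longrightarrow> integral {a..b} (Fx t) = 0"
    and t: "t1 \<in> I" "t2 \<in> I"
  shows "integral {a..b} (F t1) = integral {a..b} (F t2)"
proof -
  have "((\<lambda>t. integral (cbox a b) (F t)) has_field_derivative 0) (at t within I)" if "t \<in> I" for t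
  proof -
    have "((\<lambda>t. integral (cbox a b) (F t)) has_field_derivative integral (cbox a b) (Fx t)) (at t within I)"
      by (rule leibniz_rule_field_derivative[OF d _ _ that I])
        (use c cx in \<open>auto intro!: integrable_cont\<close>)
    then show ?thesis using z[OF that] by simp
  qed
  from has_field_derivative_zero_constant[OF I this] obtain C where "\<forall>t\<in>I. integral (cbox a b) (F t) = C" by blast
  then show ?thesis using t by simp
qed


lemma gen_d_mass:
  assumes "(f has_real_derivative f') (at t within U)" "(g has_real_derivative g') (at t within U)"
  shows "((\<lambda>t. (f t)\<^sup>2 + (g t)\<^sup>2) has_real_derivative (2 * f t * f' + 2 * g t * g')) (at t within U)"
  using assms by (auto intro!: derivative_eq_intros simp: algebra_simps)

lemma gen_d_mom:
  assumes "(f has_real_derivative f') (at t within U)" "(g has_real_derivative g') (at t within U)"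
    "(fx has_real_derivative fx') (at t within U)" "(gx has_real_derivative gx') (at t within U)"
  shows "((\<lambda>t. f t * gx t - g t * fx t) has_real_derivative
     (f' * gx t + f t * gx' - g' * fx t - g t * fx')) (at t within U)"
  using assms by (auto intro!: derivative_eq_intros simp: algebra_simps)

lemma gen_d_en:
  assumes "(f has_real_derivative f') (at t within U)" "(g has_real_derivative g') (at t within U)"
    "(fx has_real_derivative fx') (at t within U)" "(gx has_real_derivative gx') (at t within U)"
  shows "((\<lambda>t. (fx t)\<^sup>2 + (gx t)\<^sup>2 - \<beta> / 2 * ((f t)\<^sup>2 + (g t)\<^sup>2)\<^sup>2) has_real_derivative
     (2 * fx t * fx' + 2 * gx t * gx' - 2 * \<beta> * ((f t)\<^sup>2 + (g t)\<^sup>2) * (f t * f' + g t * g'))) (at t within U)"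
  using assms by (auto intro!: derivative_eq_intros simp: algebra_simps power2_eq_square)

lemma main:
  fixes \<beta> :: real and I :: "real set"
    and v w v' w' :: "real \<Rightarrow> real \<Rightarrow> real"
  assumes I_open: "open I" and I_interval: "is_interval I"
    and v_Tk: "\<forall>t\<in>I. v t \<in> trig_poly a b k"
    and w_Tk: "\<forall>t\<in>I. w t \<in> trig_poly a b k"
    and v_diff: "\<forall>t\<in>I. \<forall>x. ((\<lambda>s. v s x) has_real_derivative v' t x) (at t)"
    and w_diff: "\<forall>t\<in>I. \<forall>x. ((\<lambda>s. w s x) has_real_derivative w' t x) (at t)"
    and v'_cont: "\<forall>x. continuous_on I (\<lambda>s. v' s x)"
    and w'_cont: "\<forall>x. continuous_on I (\<lambda>s. w' s x)"
    and v_eq: "\<forall>t\<in>I. \<forall>x. v' t x = - deriv (deriv (w t)) x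
        - \<beta> * L2_proj a b k (\<lambda>y. ((v t y)\<^sup>2 + (w t y)\<^sup>2) * w t y) x"
    and w_eq: "\<forall>t\<in>I. \<forall>x. w' t x = deriv (deriv (v t)) x
        + \<beta> * L2_proj a b k (\<lambda>y. ((v t y)\<^sup>2 + (w t y)\<^sup>2) * v t y) x"
  shows "\<forall>t1\<in>I. \<forall>t2\<in>I.
           nls_mass a b (v t1) (w t1) = nls_mass a b (v t2) (w t2) \<and>
           nls_momentum a b (v t1) (w t1) = nls_momentum a b (v t2) (w t2) \<and>
           nls_energy \<beta> a b (v t1) (w t1) = nls_energy \<beta> a b (v t2) (w t2)"
proof -
  have Icvx: "convex I" using I_interval by (simp add: is_interval_convex)
  define cv where "cv = (\<lambda>t. dc (v t))"
  define sv where "sv = (\<lambda>t. dsn (v t))"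
  define cw where "cw = (\<lambda>t. dc (w t))"
  define sw where "sw = (\<lambda>t. dsn (w t))"
  define cv' where "cv' = (\<lambda>t. dc (v' t))"
  define sv' where "sv' = (\<lambda>t. dsn (v' t))"
  define cw' where "cw' = (\<lambda>t. dc (w' t))"
  define sw' where "sw' = (\<lambda>t. dsn (w' t))"
  have cvd: "((\<lambda>s. cv s j) has_real_derivative cv' t j) (at t)" if "t \<in> I" for t j
    unfolding cv_def cv'_def using v_diff that by (intro dc_deriv) auto
  have svd: "((\<lambda>s. sv s j) has_real_derivative sv' t j) (at t)" if "t \<in> I" for t j
    unfolding sv_def sv'_def using v_diff that by (intro dsn_deriv) auto
  have cwd: "((\<lambda>s. cw s j) has_real_derivative cw' t j) (at t)" if "t \<in> I" for t j
    unfolding cw_def cw'_def using w_diff that by (intro dc_deriv) auto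
  have swd: "((\<lambda>s. sw s j) has_real_derivative sw' t j) (at t)" if "t \<in> I" for t j
    unfolding sw_def sw'_def using w_diff that by (intro dsn_deriv) auto
  have cvc: "continuous_on I (\<lambda>s. cv s j)" for j
    by (rule continuous_at_imp_continuous_on) (use cvd DERIV_isCont in blast)
  have svc: "continuous_on I (\<lambda>s. sv s j)" for j
    by (rule continuous_at_imp_continuous_on) (use svd DERIV_isCont in blast)
  have cwc: "continuous_on I (\<lambda>s. cw s j)" for j
    by (rule continuous_at_imp_continuous_on) (use cwd DERIV_isCont in blast)
  have swc: "continuous_on I (\<lambda>s. sw s j)" for j
    by (rule continuous_at_imp_continuous_on) (use swd DERIV_isCont in blast)
  have cv'c: "continuous_on I (\<lambda>s. cv' s j)" for j
    unfolding cv'_def using v'_cont by (intro dc_cont) auto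
  have sv'c: "continuous_on I (\<lambda>s. sv' s j)" for j
    unfolding sv'_def using v'_cont by (intro dsn_cont) auto
  have cw'c: "continuous_on I (\<lambda>s. cw' s j)" for j
    unfolding cw'_def using w'_cont by (intro dc_cont) auto
  have sw'c: "continuous_on I (\<lambda>s. sw' s j)" for j
    unfolding sw'_def using w'_cont by (intro dsn_cont) auto
  have V: "v t = tp (cv t) (sv t)" if "t \<in> I" for t
    using v_Tk that tp_dc unfolding cv_def sv_def by auto
  have W: "w t = tp (cw t) (sw t)" if "t \<in> I" for t
    using w_Tk that tp_dc unfolding cw_def sw_def by auto
  have V': "v' t = tp (cv' t) (sv' t)" if t: "t \<in> I" for t
  proof (rule ext)
    fix x
    have "((\<lambda>s. tp (cv s) (sv s) x) has_real_derivative tp (cv' t) (sv' t) x) (at t)"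
      by (rule tp_dt) (use cvd svd t in auto)
    then have "((\<lambda>s. v s x) has_real_derivative tp (cv' t) (sv' t) x) (at t)"
      by (rule has_field_derivative_transform_within_open[OF _ I_open t]) (simp add: V)
    then show "v' t x = tp (cv' t) (sv' t) x" using v_diff t DERIV_unique by blast
  qed
  have W': "w' t = tp (cw' t) (sw' t)" if t: "t \<in> I" for t
  proof (rule ext)
    fix x
    have "((\<lambda>s. tp (cw s) (sw s) x) has_real_derivative tp (cw' t) (sw' t) x) (at t)"
      by (rule tp_dt) (use cwd swd t in auto)
    then have "((\<lambda>s. w s x) has_real_derivative tp (cw' t) (sw' t) x) (at t)"
      by (rule has_field_derivative_transform_within_open[OF _ I_open t]) (simp add: W)
    then show "w' t x = tp (cw' t) (sw' t) x" using w_diff t DERIV_unique by blast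
  qed
  have hV: "((\<lambda>t. tp (cv t) (sv t) x) has_real_derivative tp (cv' t) (sv' t) x) (at t within I)" if "t \<in> I" for t x
    by (rule tp_dt) (use cvd svd that in \<open>auto intro: has_field_derivative_at_within\<close>)
  have hW: "((\<lambda>t. tp (cw t) (sw t) x) has_real_derivative tp (cw' t) (sw' t) x) (at t within I)" if "t \<in> I" for t x
    by (rule tp_dt) (use cwd swd that in \<open>auto intro: has_field_derivative_at_within\<close>)
  have hVx: "((\<lambda>t. tp (dco (sv t)) (dsi (cv t)) x) has_real_derivative tp (dco (sv' t)) (dsi (cv' t)) x) (at t within I)" if "t \<in> I" for t x
    by (rule tp_dt[where c="\<lambda>t. dco (sv t)" and s="\<lambda>t. dsi (cv t)"]; rule dco_dt dsi_dt)
      (use cvd svd that in \<open>auto intro: has_field_derivative_at_within\<close>)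
  have hWx: "((\<lambda>t. tp (dco (sw t)) (dsi (cw t)) x) has_real_derivative tp (dco (sw' t)) (dsi (cw' t)) x) (at t within I)" if "t \<in> I" for t x
    by (rule tp_dt[where c="\<lambda>t. dco (sw t)" and s="\<lambda>t. dsi (cw t)"]; rule dco_dt dsi_dt)
      (use cwd swd that in \<open>auto intro: has_field_derivative_at_within\<close>)
  have dcoc: "continuous_on I (\<lambda>t. dco (s t) j)" if "\<And>j. continuous_on I (\<lambda>t. s t j)" for s j
    unfolding dco_def by (intro continuous_intros that)
  have dsic: "continuous_on I (\<lambda>t. dsi (s t) j)" if "\<And>j. continuous_on I (\<lambda>t. s t j)" for s j
    unfolding dsi_def by (intro continuous_intros that)
  have jc [continuous_intros]:
    "continuous_on (I \<times> {a..b}) (\<lambda>p. tp (cv (fst p)) (sv (fst p)) (snd p))"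
    "continuous_on (I \<times> {a..b}) (\<lambda>p. tp (cw (fst p)) (sw (fst p)) (snd p))"
    "continuous_on (I \<times> {a..b}) (\<lambda>p. tp (cv' (fst p)) (sv' (fst p)) (snd p))"
    "continuous_on (I \<times> {a..b}) (\<lambda>p. tp (cw' (fst p)) (sw' (fst p)) (snd p))"
    "continuous_on (I \<times> {a..b}) (\<lambda>p. tp (dco (sv (fst p))) (dsi (cv (fst p))) (snd p))"
    "continuous_on (I \<times> {a..b}) (\<lambda>p. tp (dco (sw (fst p))) (dsi (cw (fst p))) (snd p))"
    "continuous_on (I \<times> {a..b}) (\<lambda>p. tp (dco (sv' (fst p))) (dsi (cv' (fst p))) (snd p))"
    "continuous_on (I \<times> {a..b}) (\<lambda>p. tp (dco (sw' (fst p))) (dsi (cw' (fst p))) (snd p))"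
    using tp_jcont[of I cv sv "{a..b}"] tp_jcont[of I cw sw "{a..b}"]
      tp_jcont[of I cv' sv' "{a..b}"] tp_jcont[of I cw' sw' "{a..b}"]
      tp_jcont[of I "\<lambda>t. dco (sv t)" "\<lambda>t. dsi (cv t)" "{a..b}"]
      tp_jcont[of I "\<lambda>t. dco (sw t)" "\<lambda>t. dsi (cw t)" "{a..b}"]
      tp_jcont[of I "\<lambda>t. dco (sv' t)" "\<lambda>t. dsi (cv' t)" "{a..b}"]
      tp_jcont[of I "\<lambda>t. dco (sw' t)" "\<lambda>t. dsi (cw' t)" "{a..b}"]
    by (simp_all add: cvc svc cwc swc cv'c sv'c cw'c sw'c dcoc dsic)
  have eV: "tp (cv' t) (sv' t) x = - tp (dco (dsi (cw t))) (dsi (dco (sw t))) x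
      - \<beta> * tp (pc (\<lambda>y. ((tp (cv t) (sv t) y)\<^sup>2 + (tp (cw t) (sw t) y)\<^sup>2) * tp (cw t) (sw t) y))
               (ps (\<lambda>y. ((tp (cv t) (sv t) y)\<^sup>2 + (tp (cw t) (sw t) y)\<^sup>2) * tp (cw t) (sw t) y)) x"
    if t: "t \<in> I" for t x
  proof -
    have c: "continuous_on {a..b} (\<lambda>y. ((tp (cv t) (sv t) y)\<^sup>2 + (tp (cw t) (sw t) y)\<^sup>2) * tp (cw t) (sw t) y)"
      by (intro continuous_intros)
    have "v' t x = - deriv (deriv (w t)) x - \<beta> * L2_proj a b k (\<lambda>y. ((v t y)\<^sup>2 + (w t y)\<^sup>2) * w t y) x"
      using v_eq t by blast
    then show ?thesis unfolding V'[OF t] V[OF t] W[OF t] deriv_tp proj_eq[OF c] .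
  qed
  have eW: "tp (cw' t) (sw' t) x = tp (dco (dsi (cv t))) (dsi (dco (sv t))) x
      + \<beta> * tp (pc (\<lambda>y. ((tp (cv t) (sv t) y)\<^sup>2 + (tp (cw t) (sw t) y)\<^sup>2) * tp (cv t) (sv t) y))
               (ps (\<lambda>y. ((tp (cv t) (sv t) y)\<^sup>2 + (tp (cw t) (sw t) y)\<^sup>2) * tp (cv t) (sv t) y)) x"
    if t: "t \<in> I" for t x
  proof -
    have c: "continuous_on {a..b} (\<lambda>y. ((tp (cv t) (sv t) y)\<^sup>2 + (tp (cw t) (sw t) y)\<^sup>2) * tp (cv t) (sv t) y)"
      by (intro continuous_intros)
    have "w' t x = deriv (deriv (v t)) x + \<beta> * L2_proj a b k (\<lambda>y. ((v t y)\<^sup>2 + (w t y)\<^sup>2) * v t y) x"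
      using w_eq t by blast
    then show ?thesis unfolding W'[OF t] V[OF t] W[OF t] deriv_tp proj_eq[OF c] .
  qed
  show ?thesis
  proof (intro ballI conjI)
    fix t1 t2 assume t1: "t1 \<in> I" and t2: "t2 \<in> I"
    show "nls_mass a b (v t1) (w t1) = nls_mass a b (v t2) (w t2)"
    proof -
      have "integral {a..b} (\<lambda>x. (tp (cv t1) (sv t1) x)\<^sup>2 + (tp (cw t1) (sw t1) x)\<^sup>2)
          = integral {a..b} (\<lambda>x. (tp (cv t2) (sv t2) x)\<^sup>2 + (tp (cw t2) (sw t2) x)\<^sup>2)"
      proof (rule leib_const[OF Icvx _ _ _ _ t1 t2,
            where Fx="\<lambda>t x. 2 * tp (cv t) (sv t) x * tp (cv' t) (sv' t) x + 2 * tp (cw t) (sw t) x * tp (cw' t) (sw' t) x"])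
        show "((\<lambda>t. (tp (cv t) (sv t) x)\<^sup>2 + (tp (cw t) (sw t) x)\<^sup>2) has_real_derivative
           2 * tp (cv t) (sv t) x * tp (cv' t) (sv' t) x + 2 * tp (cw t) (sw t) x * tp (cw' t) (sw' t) x) (at t within I)"
          if "t \<in> I" for t x
          by (rule gen_d_mass[OF hV[OF that] hW[OF that]])
        show "continuous_on {a..b} (\<lambda>x. (tp (cv t) (sv t) x)\<^sup>2 + (tp (cw t) (sw t) x)\<^sup>2)" for t
          by (intro continuous_intros)
        show "continuous_on (I \<times> {a..b}) (\<lambda>(t, x). 2 * tp (cv t) (sv t) x * tp (cv' t) (sv' t) x + 2 * tp (cw t) (sw t) x * tp (cw' t) (sw' t) x)"
          unfolding case_prod_beta by (intro continuous_intros)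
        show "integral {a..b} (\<lambda>x. 2 * tp (cv t) (sv t) x * tp (cv' t) (sv' t) x + 2 * tp (cw t) (sw t) x * tp (cw' t) (sw' t) x) = 0"
          if "t \<in> I" for t
          by (rule static_mass) (use eV eW that in auto)
      qed
      then show ?thesis unfolding nls_mass_def V[OF t1] W[OF t1] V[OF t2] W[OF t2] .
    qed
    show "nls_momentum a b (v t1) (w t1) = nls_momentum a b (v t2) (w t2)"
    proof -
      have "integral {a..b} (\<lambda>x. tp (cv t1) (sv t1) x * tp (dco (sw t1)) (dsi (cw t1)) x - tp (cw t1) (sw t1) x * tp (dco (sv t1)) (dsi (cv t1)) x)
          = integral {a..b} (\<lambda>x. tp (cv t2) (sv t2) x * tp (dco (sw t2)) (dsi (cw t2)) x - tp (cw t2) (sw t2) x * tp (dco (sv t2)) (dsi (cv t2)) x)"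
      proof (rule leib_const[OF Icvx _ _ _ _ t1 t2,
            where Fx="\<lambda>t x. tp (cv' t) (sv' t) x * tp (dco (sw t)) (dsi (cw t)) x + tp (cv t) (sv t) x * tp (dco (sw' t)) (dsi (cw' t)) x
               - tp (cw' t) (sw' t) x * tp (dco (sv t)) (dsi (cv t)) x - tp (cw t) (sw t) x * tp (dco (sv' t)) (dsi (cv' t)) x"])
        show "((\<lambda>t. tp (cv t) (sv t) x * tp (dco (sw t)) (dsi (cw t)) x - tp (cw t) (sw t) x * tp (dco (sv t)) (dsi (cv t)) x) has_real_derivative
           tp (cv' t) (sv' t) x * tp (dco (sw t)) (dsi (cw t)) x + tp (cv t) (sv t) x * tp (dco (sw' t)) (dsi (cw' t)) x
               - tp (cw' t) (sw' t) x * tp (dco (sv t)) (dsi (cv t)) x - tp (cw t) (sw t) x * tp (dco (sv' t)) (dsi (cv' t)) x) (at t within I)"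
          if "t \<in> I" for t x
          by (rule gen_d_mom[OF hV[OF that] hW[OF that] hVx[OF that] hWx[OF that]])
        show "continuous_on {a..b} (\<lambda>x. tp (cv t) (sv t) x * tp (dco (sw t)) (dsi (cw t)) x - tp (cw t) (sw t) x * tp (dco (sv t)) (dsi (cv t)) x)" for t
          by (intro continuous_intros)
        show "continuous_on (I \<times> {a..b}) (\<lambda>(t, x). tp (cv' t) (sv' t) x * tp (dco (sw t)) (dsi (cw t)) x + tp (cv t) (sv t) x * tp (dco (sw' t)) (dsi (cw' t)) x
               - tp (cw' t) (sw' t) x * tp (dco (sv t)) (dsi (cv t)) x - tp (cw t) (sw t) x * tp (dco (sv' t)) (dsi (cv' t)) x)"
          unfolding case_prod_beta by (intro continuous_intros)
        show "integral {a..b} (\<lambda>x. tp (cv' t) (sv' t) x * tp (dco (sw t)) (dsi (cw t)) x + tp (cv t) (sv t) x * tp (dco (sw' t)) (dsi (cw' t)) x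
               - tp (cw' t) (sw' t) x * tp (dco (sv t)) (dsi (cv t)) x - tp (cw t) (sw t) x * tp (dco (sv' t)) (dsi (cv' t)) x) = 0"
          if "t \<in> I" for t
          by (rule static_mom) (use eV eW that in auto)
      qed
      then show ?thesis unfolding nls_momentum_def V[OF t1] W[OF t1] V[OF t2] W[OF t2] deriv_tp .
    qed
    show "nls_energy \<beta> a b (v t1) (w t1) = nls_energy \<beta> a b (v t2) (w t2)"
    proof -
      have "integral {a..b} (\<lambda>x. (tp (dco (sv t1)) (dsi (cv t1)) x)\<^sup>2 + (tp (dco (sw t1)) (dsi (cw t1)) x)\<^sup>2
              - \<beta> / 2 * ((tp (cv t1) (sv t1) x)\<^sup>2 + (tp (cw t1) (sw t1) x)\<^sup>2)\<^sup>2)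
          = integral {a..b} (\<lambda>x. (tp (dco (sv t2)) (dsi (cv t2)) x)\<^sup>2 + (tp (dco (sw t2)) (dsi (cw t2)) x)\<^sup>2
              - \<beta> / 2 * ((tp (cv t2) (sv t2) x)\<^sup>2 + (tp (cw t2) (sw t2) x)\<^sup>2)\<^sup>2)"
      proof (rule leib_const[OF Icvx _ _ _ _ t1 t2,
            where Fx="\<lambda>t x. 2 * tp (dco (sv t)) (dsi (cv t)) x * tp (dco (sv' t)) (dsi (cv' t)) x
               + 2 * tp (dco (sw t)) (dsi (cw t)) x * tp (dco (sw' t)) (dsi (cw' t)) x
               - 2 * \<beta> * ((tp (cv t) (sv t) x)\<^sup>2 + (tp (cw t) (sw t) x)\<^sup>2)
                   * (tp (cv t) (sv t) x * tp (cv' t) (sv' t) x + tp (cw t) (sw t) x * tp (cw' t) (sw' t) x)"])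
        show "((\<lambda>t. (tp (dco (sv t)) (dsi (cv t)) x)\<^sup>2 + (tp (dco (sw t)) (dsi (cw t)) x)\<^sup>2
              - \<beta> / 2 * ((tp (cv t) (sv t) x)\<^sup>2 + (tp (cw t) (sw t) x)\<^sup>2)\<^sup>2) has_real_derivative
           2 * tp (dco (sv t)) (dsi (cv t)) x * tp (dco (sv' t)) (dsi (cv' t)) x
               + 2 * tp (dco (sw t)) (dsi (cw t)) x * tp (dco (sw' t)) (dsi (cw' t)) x
               - 2 * \<beta> * ((tp (cv t) (sv t) x)\<^sup>2 + (tp (cw t) (sw t) x)\<^sup>2)
                   * (tp (cv t) (sv t) x * tp (cv' t) (sv' t) x + tp (cw t) (sw t) x * tp (cw' t) (sw' t) x)) (at t within I)"
          if "t \<in> I" for t x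
          by (rule gen_d_en[OF hV[OF that] hW[OF that] hVx[OF that] hWx[OF that]])
        show "continuous_on {a..b} (\<lambda>x. (tp (dco (sv t)) (dsi (cv t)) x)\<^sup>2 + (tp (dco (sw t)) (dsi (cw t)) x)\<^sup>2
              - \<beta> / 2 * ((tp (cv t) (sv t) x)\<^sup>2 + (tp (cw t) (sw t) x)\<^sup>2)\<^sup>2)" for t
          by (intro continuous_intros)
        show "continuous_on (I \<times> {a..b}) (\<lambda>(t, x). 2 * tp (dco (sv t)) (dsi (cv t)) x * tp (dco (sv' t)) (dsi (cv' t)) x
               + 2 * tp (dco (sw t)) (dsi (cw t)) x * tp (dco (sw' t)) (dsi (cw' t)) x
               - 2 * \<beta> * ((tp (cv t) (sv t) x)\<^sup>2 + (tp (cw t) (sw t) x)\<^sup>2)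
                   * (tp (cv t) (sv t) x * tp (cv' t) (sv' t) x + tp (cw t) (sw t) x * tp (cw' t) (sw' t) x))"
          unfolding case_prod_beta by (intro continuous_intros)
        show "integral {a..b} (\<lambda>x. 2 * tp (dco (sv t)) (dsi (cv t)) x * tp (dco (sv' t)) (dsi (cv' t)) x
               + 2 * tp (dco (sw t)) (dsi (cw t)) x * tp (dco (sw' t)) (dsi (cw' t)) x
               - 2 * \<beta> * ((tp (cv t) (sv t) x)\<^sup>2 + (tp (cw t) (sw t) x)\<^sup>2)
                   * (tp (cv t) (sv t) x * tp (cv' t) (sv' t) x + tp (cw t) (sw t) x * tp (cw' t) (sw' t) x)) = 0"
          if "t \<in> I" for t
          by (rule static_en) (use eV eW that in auto)
      qed
      then show ?thesis unfolding nls_energy_def V[OF t1] W[OF t1] V[OF t2] W[OF t2] deriv_tp .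
    qed
  qed
qed

end

theorem theorem2p3:
  fixes a b \<beta> :: real and k :: nat and I :: "real set"
    and v w v' w' :: "real \<Rightarrow> real \<Rightarrow> real"
  assumes ab: "a < b"
    and I_open: "open I" and I_interval: "is_interval I"
    and v_Tk: "\<forall>t\<in>I. v t \<in> trig_poly a b k"
    and w_Tk: "\<forall>t\<in>I. w t \<in> trig_poly a b k"
    and v_diff: "\<forall>t\<in>I. \<forall>x. ((\<lambda>s. v s x) has_real_derivative v' t x) (at t)"
    and w_diff: "\<forall>t\<in>I. \<forall>x. ((\<lambda>s. w s x) has_real_derivative w' t x) (at t)"
    and v'_cont: "\<forall>x. continuous_on I (\<lambda>s. v' s x)"
    and w'_cont: "\<forall>x. continuous_on I (\<lambda>s. w' s x)"
    and v_eq: "\<forall>t\<in>I. \<forall>x. v' t x = - deriv (deriv (w t)) x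
        - \<beta> * L2_proj a b k (\<lambda>y. ((v t y)\<^sup>2 + (w t y)\<^sup>2) * w t y) x"
    and w_eq: "\<forall>t\<in>I. \<forall>x. w' t x = deriv (deriv (v t)) x
        + \<beta> * L2_proj a b k (\<lambda>y. ((v t y)\<^sup>2 + (w t y)\<^sup>2) * v t y) x"
  shows "\<forall>t1\<in>I. \<forall>t2\<in>I.
           nls_mass a b (v t1) (w t1) = nls_mass a b (v t2) (w t2) \<and>
           nls_momentum a b (v t1) (w t1) = nls_momentum a b (v t2) (w t2) \<and>
           nls_energy \<beta> a b (v t1) (w t1) = nls_energy \<beta> a b (v t2) (w t2)"
proof -
  interpret tpl a b k using ab by unfold_locales
  show ?thesis
    by (rule main[OF I_open I_interval v_Tk w_Tk v_diff w_diff v'_cont w'_cont v_eq w_eq])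
qed

end
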